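(* For every object $V$ of $\mathcal{E}_q^{deg}$ there is an isomorphism in $\mathcal{F}_{iso}$ $$Q_V\cong\bigoplus_{A\in\mathcal{S}_V}iso_A,$$ where $\mathcal{S}_V$ is the set of subobjects $\alpha:A\hookrightarrow V$ of $V$ in $\mathcal{E}_q^{deg}$ (equivalently, the linear subspaces $A$ of $V$ with the restricted form, $V$ itself included).
   Context: $\mathcal{E}$: all $\mathbb{F}_2$-vector spaces; $(-)^*$ linear duality. $\mathcal{E}_q^{deg}$: objects finite-dimensional quadratic spaces over $\mathbb{F}_2$ (possibly degenerate), morphisms injective linear maps preserving quadratic forms. $\mathrm{Sp}(\mathcal{E}_q^{deg})$: same objects, morphisms spans $[V\leftarrow D\rightarrow W]$ up to iso of $D$, composed by pullback. $\mathcal{F}_{iso}=\mathrm{Func}(\mathrm{Sp}(\mathcal{E}_q^{deg}),\mathcal{E})$. $Q_V=\mathbb{F}_2[\mathrm{Hom}_{\mathrm{Sp}(\mathcal{E}_q^{deg})}(V,-)]$. Duality: $DF=(-)^*\circ F\circ tr^{op}$ with $tr[V\leftarrow X\rightarrow W]=[W\leftarrow X\rightarrow V]$. $a_V:Q_V\to DQ_V$ is the morphism corresponding by Yoneda to the linear form $(\mathrm{Id}_V)^*\in\mathbb{F}_2[\mathrm{End}(V)]^*$ taking value $1$ on $\mathrm{Id}_V$ and $0$ on all other basis elements; the isotropic functor $iso_V$ is the image of $a_V$. *)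

theory Defs
  imports Main "HOL-Library.Z2" "HOL-Library.Function_Algebras"
begin

text \<open>Every finite-dimensional F_2-vector space is
  realised as a finite subspace of the ambient F_2-vector space nat => bit
  (pointwise addition); over F_2 a subspace is a subset containing 0 and closed
  under addition, and finite-dimensional means finite.\<close>

type_synonym vec = "nat \<Rightarrow> bit"

text \<open>An object: carrier subspace together with a quadratic form on it
  (extended by 0 outside the carrier, so that objects are determined by their data).\<close>
type_synonym qobj = "vec set \<times> (vec \<Rightarrow> bit)"

definition car :: "qobj \<Rightarrow> vec set" where "car V = fst V"
definition qf :: "qobj \<Rightarrow> vec \<Rightarrow> bit" where "qf V = snd V"

definition subspace2 :: "vec set \<Rightarrow> bool" where
  "subspace2 A \<longleftrightarrow> 0 \<in> A \<and> (\<forall>x\<in>A. \<forall>y\<in>A. x + y \<in> A)"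

text \<open>Polar form of q; q is a quadratic form iff q 0 = 0 and its polar form is bilinear
  (over F_2 this is the usual definition q(lambda x) = lambda^2 q(x), polar form bilinear).
  Degenerate forms are allowed.\<close>
definition polar :: "(vec \<Rightarrow> bit) \<Rightarrow> vec \<Rightarrow> vec \<Rightarrow> bit" where
  "polar q x y = q (x + y) + q x + q y"

definition quadratic_form :: "vec set \<Rightarrow> (vec \<Rightarrow> bit) \<Rightarrow> bool" where
  "quadratic_form A q \<longleftrightarrow> q 0 = 0 \<and>
     (\<forall>x\<in>A. \<forall>y\<in>A. \<forall>z\<in>A. polar q (x + y) z = polar q x z + polar q y z
                       \<and> polar q z (x + y) = polar q z x + polar q z y)"

definition is_obj :: "qobj \<Rightarrow> bool" where
  "is_obj V \<longleftrightarrow> finite (car V) \<and> subspace2 (car V) \<and> quadratic_form (car V) (qf V)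
     \<and> (\<forall>x. x \<notin> car V \<longrightarrow> qf V x = 0)"

definition is_qmor :: "qobj \<Rightarrow> qobj \<Rightarrow> (vec \<Rightarrow> vec) \<Rightarrow> bool" where
  "is_qmor V W f \<longleftrightarrow> f ` car V \<subseteq> car W \<and> inj_on f (car V)
     \<and> (\<forall>x\<in>car V. \<forall>y\<in>car V. f (x + y) = f x + f y)
     \<and> (\<forall>x\<in>car V. qf W (f x) = qf V x)"

type_synonym span = "qobj \<times> (vec \<Rightarrow> vec) \<times> (vec \<Rightarrow> vec)"

definition is_span :: "qobj \<Rightarrow> qobj \<Rightarrow> span \<Rightarrow> bool" where
  "is_span V W s \<longleftrightarrow> (case s of (D, f, g) \<Rightarrow> is_obj D \<and> is_qmor D V f \<and> is_qmor D W g)"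

text \<open>The isomorphism class of a span is represented by its canonical
  representative: the image of D in V x W (the legs are jointly injective, so two
  spans are isomorphic over V and W iff these images coincide).\<close>
type_synonym smor = "(vec \<times> vec) set"

definition span_class :: "span \<Rightarrow> smor" where
  "span_class s = (case s of (D, f, g) \<Rightarrow> (\<lambda>d. (f d, g d)) ` car D)"

definition hom :: "qobj \<Rightarrow> qobj \<Rightarrow> smor set" where
  "hom V W = span_class ` {s. is_span V W s}"

text \<open>Composition by pullback: for S : V -> W and T : W -> U the class of the
  composite T o S is the relational composite S O T (pullback along the
  injective legs into W).  Identity of V is Id_on (car V); the transposition tr
  of a span is converse.\<close>

text \<open>A functor is given by its values on objects (F_2-subspaces of an ambient
  type of characteristic 2; over F_2, linear = additive) and on morphisms
  (F_mor V W S : F(V) -> F(W) for S in hom V W).\<close>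
type_synonym 'x functor_data = "(qobj \<Rightarrow> 'x set) \<times> (qobj \<Rightarrow> qobj \<Rightarrow> smor \<Rightarrow> 'x \<Rightarrow> 'x)"

definition Fob :: "'x functor_data \<Rightarrow> qobj \<Rightarrow> 'x set" where "Fob F = fst F"
definition Fmor :: "'x functor_data \<Rightarrow> qobj \<Rightarrow> qobj \<Rightarrow> smor \<Rightarrow> 'x \<Rightarrow> 'x" where "Fmor F = snd F"

text \<open>Q_V = F_2[Hom(V,-)]: finitely supported F_2-valued functions on Hom(V,W)
  (Hom(V,W) is finite); a morphism T acts on basis elements by post-composition.\<close>
definition Qob :: "qobj \<Rightarrow> qobj \<Rightarrow> (smor \<Rightarrow> bit) set" where
  "Qob V W = {x. \<forall>S. S \<notin> hom V W \<longrightarrow> x S = 0}"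

definition Qmor :: "qobj \<Rightarrow> qobj \<Rightarrow> qobj \<Rightarrow> smor \<Rightarrow> (smor \<Rightarrow> bit) \<Rightarrow> (smor \<Rightarrow> bit)" where
  "Qmor V W W' T x = (\<lambda>S'. if S' \<in> hom V W' then (\<Sum>S\<in>{S\<in>hom V W. S O T = S'}. x S) else 0)"

definition Qfun :: "qobj \<Rightarrow> (smor \<Rightarrow> bit) functor_data" where
  "Qfun V = (Qob V, Qmor V)"

text \<open>Duality DF = (-)^* o F o tr^op: DF(W) = linear forms on F(W) (extended by 0),
  and DF(S) phi = phi o F(tr S).\<close>
definition dual_fun :: "('x::plus) functor_data \<Rightarrow> ('x \<Rightarrow> bit) functor_data" where
  "dual_fun F =
    ((\<lambda>W. {\<phi>. (\<forall>x\<in>Fob F W. \<forall>y\<in>Fob F W. \<phi> (x + y) = \<phi> x + \<phi> y)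
              \<and> (\<forall>x. x \<notin> Fob F W \<longrightarrow> \<phi> x = 0)}),
     (\<lambda>W W' S \<phi>. (\<lambda>y. if y \<in> Fob F W' then \<phi> (Fmor F W' W (converse S) y) else 0)))"

text \<open>Yoneda: the natural map Q_V -> G corresponding to xi in G(V), sending the
  basis element S in Hom(V,W) to G(S)(xi), extended linearly.\<close>
definition yoneda :: "('x::comm_monoid_add) functor_data \<Rightarrow> qobj \<Rightarrow> 'x \<Rightarrow> qobj \<Rightarrow> (smor \<Rightarrow> bit) \<Rightarrow> 'x" where
  "yoneda G V \<xi> W x = (\<Sum>S\<in>hom V W. if x S = 1 then Fmor G V W S \<xi> else 0)"

definition delta_id :: "qobj \<Rightarrow> (smor \<Rightarrow> bit) \<Rightarrow> bit" where
  "delta_id V = (\<lambda>x. if x \<in> Qob V V then x (Id_on (car V)) else 0)"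

definition a_map :: "qobj \<Rightarrow> qobj \<Rightarrow> (smor \<Rightarrow> bit) \<Rightarrow> ((smor \<Rightarrow> bit) \<Rightarrow> bit)" where
  "a_map V = yoneda (dual_fun (Qfun V)) V (delta_id V)"

definition iso_fun :: "qobj \<Rightarrow> ((smor \<Rightarrow> bit) \<Rightarrow> bit) functor_data" where
  "iso_fun V = ((\<lambda>W. a_map V W ` Qob V W), Fmor (dual_fun (Qfun V)))"

definition subobjects :: "qobj \<Rightarrow> qobj set" where
  "subobjects V = {(A, \<lambda>x. if x \<in> A then qf V x else 0) | A. A \<subseteq> car V \<and> subspace2 A}"

definition dsum :: "'i set \<Rightarrow> ('i \<Rightarrow> ('x::zero) functor_data) \<Rightarrow> ('i \<Rightarrow> 'x) functor_data" where
  "dsum I F =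
    ((\<lambda>W. {y. (\<forall>i\<in>I. y i \<in> Fob (F i) W) \<and> (\<forall>i. i \<notin> I \<longrightarrow> y i = 0)}),
     (\<lambda>W W' S y. (\<lambda>i. if i \<in> I then Fmor (F i) W W' S (y i) else 0)))"

definition nat_iso :: "('x::plus) functor_data \<Rightarrow> ('y::plus) functor_data \<Rightarrow> bool" where
  "nat_iso F G \<longleftrightarrow> (\<exists>\<phi>. \<forall>W. is_obj W \<longrightarrow>
      bij_betw (\<phi> W) (Fob F W) (Fob G W)
    \<and> (\<forall>x\<in>Fob F W. \<forall>y\<in>Fob F W. \<phi> W (x + y) = \<phi> W x + \<phi> W y)
    \<and> (\<forall>W'. is_obj W' \<longrightarrow> (\<forall>S\<in>hom W W'. \<forall>x\<in>Fob F W.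
          \<phi> W' (Fmor F W W' S x) = Fmor G W W' S (\<phi> W x))))"

end

theory Submission
  imports Defs
begin

declare add_bit_eq_xor[simp del] mult_bit_eq_and[simp del]
lemma bit_add_self[simp]: "(a::bit) + a = 0" by (cases a) auto
lemma vec_add_self[simp]: "(x::vec) + x = 0" by (rule ext) simp
lemma sum_fun_apply: "(\<Sum>i\<in>I. f i) x = (\<Sum>i\<in>I. f i x)"
  by (induction I rule: infinite_finite_induct) auto

definition pimap :: "qobj \<Rightarrow> qobj \<Rightarrow> smor \<Rightarrow> bool" where
 "pimap V W S \<longleftrightarrow> S \<subseteq> car V \<times> car W \<and> (0,0) \<in> S
   \<and> (\<forall>a b a' b'. (a,b)\<in>S \<longrightarrow> (a',b')\<in>S \<longrightarrow> (a+a', b+b') \<in> S)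
   \<and> single_valued S \<and> single_valued (converse S) \<and> (\<forall>a b. (a,b)\<in>S \<longrightarrow> qf W b = qf V a)"

definition robj :: "qobj \<Rightarrow> vec set \<Rightarrow> qobj" where
  "robj V X = (X, \<lambda>x. if x \<in> X then qf V x else 0)"

lemma car_robj[simp]: "car (robj V X) = X" by (simp add: robj_def car_def)
lemma qf_robj: "qf (robj V X) x = (if x \<in> X then qf V x else 0)" by (simp add: robj_def qf_def)

lemma subobjects_robj: "subobjects V = {robj V A | A. A \<subseteq> car V \<and> subspace2 A}"
  by (simp add: subobjects_def robj_def)

lemma robj_obj:
  assumes "is_obj V" "X \<subseteq> car V" "subspace2 X"
  shows "is_obj (robj V X)"
proof -
  have cl: "\<And>x y. x \<in> X \<Longrightarrow> y \<in> X \<Longrightarrow> x + y \<in> X" and z: "0 \<in> X"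
    using assms(3) by (auto simp: subspace2_def)
  have fin: "finite X" using assms by (meson finite_subset is_obj_def)
  have q0: "qf V 0 = 0" using assms(1) by (simp add: is_obj_def quadratic_form_def)
  have pol: "\<And>x y z. x \<in> car V \<Longrightarrow> y \<in> car V \<Longrightarrow> z \<in> car V \<Longrightarrow>
      polar (qf V) (x + y) z = polar (qf V) x z + polar (qf V) y z
    \<and> polar (qf V) z (x + y) = polar (qf V) z x + polar (qf V) z y"
    using assms(1) by (simp add: is_obj_def quadratic_form_def)
  have "quadratic_form X (qf (robj V X))"
    unfolding quadratic_form_def
  proof (intro conjI ballI)
    show "qf (robj V X) 0 = 0" using z q0 by (simp add: qf_robj)
  next
    fix x y z assume xyz: "x \<in> X" "y \<in> X" "z \<in> X"
    have e: "\<And>u v. u \<in> X \<Longrightarrow> v \<in> X \<Longrightarrow> polar (qf (robj V X)) u v = polar (qf V) u v"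
      using cl by (simp add: polar_def qf_robj)
    have s: "x \<in> car V" "y \<in> car V" "z \<in> car V" using xyz assms(2) by auto
    show "polar (qf (robj V X)) (x + y) z = polar (qf (robj V X)) x z + polar (qf (robj V X)) y z"
      using pol[OF s] e xyz cl by simp
    show "polar (qf (robj V X)) z (x + y) = polar (qf (robj V X)) z x + polar (qf (robj V X)) z y"
      using pol[OF s] e xyz cl by simp
  qed
  then show ?thesis using fin assms(3) by (simp add: is_obj_def qf_robj)
qed

lemma qmor_zero: assumes "is_qmor D V f" "is_obj D" shows "f 0 = 0"
proof -
  have "0 \<in> car D" using assms(2) by (simp add: is_obj_def subspace2_def)
  then have "f (0 + 0) = f 0 + f 0" using assms(1) unfolding is_qmor_def by blast
  then show ?thesis by simp
qed

lemma hom_char: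
  assumes V: "is_obj V" and W: "is_obj W"
  shows "S \<in> hom V W \<longleftrightarrow> pimap V W S"
proof
  assume "S \<in> hom V W"
  then obtain D f g where sp: "is_span V W (D,f,g)" and S: "S = (\<lambda>d. (f d, g d)) ` car D"
    by (auto simp: hom_def span_class_def)
  have D: "is_obj D" and f: "is_qmor D V f" and g: "is_qmor D W g" using sp by (auto simp: is_span_def)
  have z: "0 \<in> car D" using D by (simp add: is_obj_def subspace2_def)
  have cl: "\<And>x y. x \<in> car D \<Longrightarrow> y \<in> car D \<Longrightarrow> x + y \<in> car D" using D by (simp add: is_obj_def subspace2_def)
  show "pimap V W S" unfolding pimap_def
  proof (intro conjI allI impI)
    show "S \<subseteq> car V \<times> car W" using f g S by (auto simp: is_qmor_def)
    have "(f 0, g 0) \<in> S" using S z by blast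
    then show "(0,0) \<in> S" using qmor_zero[OF f D] qmor_zero[OF g D] by simp
  next
    fix a b a' b' assume "(a,b) \<in> S" "(a',b') \<in> S"
    then obtain d d' where dd: "d \<in> car D" "d' \<in> car D" "a = f d" "b = g d" "a' = f d'" "b' = g d'"
      using S by auto
    then have "f (d + d') = a + a'" "g (d + d') = b + b'" using f g by (auto simp: is_qmor_def)
    moreover have "d + d' \<in> car D" using cl dd by simp
    ultimately show "(a+a', b+b') \<in> S" unfolding S by force
  next
    show "single_valued S" unfolding single_valued_def S using f by (auto simp: is_qmor_def inj_on_def)
    show "single_valued (converse S)" unfolding single_valued_def S using g by (auto simp: is_qmor_def inj_on_def)
  next
    fix a b assume "(a,b) \<in> S" then show "qf W b = qf V a" using S f g by (auto simp: is_qmor_def)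
  qed
next
  assume P: "pimap V W S"
  have sub: "S \<subseteq> car V \<times> car W" and z0: "(0,0) \<in> S"
    and cl: "\<And>a b a' b'. (a,b)\<in>S \<Longrightarrow> (a',b')\<in>S \<Longrightarrow> (a+a', b+b') \<in> S"
    and sv: "single_valued S" and svc: "single_valued (converse S)"
    and q: "\<And>a b. (a,b)\<in>S \<Longrightarrow> qf W b = qf V a"
    using P unfolding pimap_def by blast+
  define X where "X = Domain S"
  define g where "g = (\<lambda>a. THE b. (a,b) \<in> S)"
  have gu: "g a = b" if "(a,b) \<in> S" for a b
    unfolding g_def using that sv by (auto simp: single_valued_def)
  have gS: "(a, g a) \<in> S" if aX: "a \<in> X" for a
  proof -
    obtain b where "(a,b) \<in> S" using aX unfolding X_def by blast
    then show ?thesis using gu[of a b] by simp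
  qed
  have XV: "X \<subseteq> car V" using sub by (auto simp: X_def)
  have sX: "subspace2 X" unfolding subspace2_def X_def
  proof (intro conjI ballI)
    show "0 \<in> Domain S" using z0 by (rule DomainI)
  next
    fix x y assume "x \<in> Domain S" "y \<in> Domain S"
    then obtain b b' where "(x,b) \<in> S" "(y,b') \<in> S" by blast
    then have "(x + y, b + b') \<in> S" by (rule cl)
    then show "x + y \<in> Domain S" by (rule DomainI)
  qed
  have D: "is_obj (robj V X)" using robj_obj[OF V XV sX] .
  have "is_qmor (robj V X) V id" using XV sX by (auto simp: is_qmor_def qf_robj subspace2_def)
  moreover have "is_qmor (robj V X) W g"
    unfolding is_qmor_def
  proof (intro conjI ballI)
    show "g ` car (robj V X) \<subseteq> car W" using gS sub by auto
    show "inj_on g (car (robj V X))"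
    proof (rule inj_onI)
      fix x y assume "x \<in> car (robj V X)" "y \<in> car (robj V X)" "g x = g y"
      then have "(g x, x) \<in> converse S" "(g x, y) \<in> converse S" using gS[of x] gS[of y] by auto
      then show "x = y" using single_valuedD[OF svc] by blast
    qed
  next
    fix x y assume "x \<in> car (robj V X)" "y \<in> car (robj V X)"
    then have "(x + y, g x + g y) \<in> S" using gS cl by simp
    then show "g (x + y) = g x + g y" by (rule gu)
  next
    fix x assume "x \<in> car (robj V X)"
    then show "qf W (g x) = qf (robj V X) x" using gS q by (simp add: qf_robj)
  qed
  ultimately have "is_span V W (robj V X, id, g)" using D by (simp add: is_span_def)
  moreover have "span_class (robj V X, id, g) = S"
  proof -
    have "span_class (robj V X, id, g) = (\<lambda>d. (d, g d)) ` X" by (simp add: span_class_def)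
    also have "\<dots> = S"
    proof
      show "(\<lambda>d. (d, g d)) ` X \<subseteq> S" using gS by auto
      show "S \<subseteq> (\<lambda>d. (d, g d)) ` X"
      proof
        fix p assume "p \<in> S"
        then obtain a b where p: "p = (a,b)" "(a,b) \<in> S" by (cases p) auto
        then have "a \<in> X" "g a = b" using gu by (auto simp: X_def)
        then show "p \<in> (\<lambda>d. (d, g d)) ` X" using p by auto
      qed
    qed
    finally show ?thesis .
  qed
  ultimately show "S \<in> hom V W" unfolding hom_def by force
qed

lemma pimapD:
  assumes "pimap V W S"
  shows "S \<subseteq> car V \<times> car W" "(0,0) \<in> S"
    "\<And>a b a' b'. (a,b)\<in>S \<Longrightarrow> (a',b')\<in>S \<Longrightarrow> (a+a', b+b') \<in> S"
    "single_valued S" "single_valued (converse S)"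
    "\<And>a b. (a,b)\<in>S \<Longrightarrow> qf W b = qf V a"
  using assms unfolding pimap_def by blast+

lemma pimap_comp:
  assumes S: "pimap V W S" and T: "pimap W U T"
  shows "pimap V U (S O T)"
  unfolding pimap_def
proof (intro conjI allI impI)
  show "S O T \<subseteq> car V \<times> car U" using pimapD(1)[OF S] pimapD(1)[OF T] by blast
  show "(0,0) \<in> S O T" using pimapD(2)[OF S] pimapD(2)[OF T] by blast
  show "single_valued (S O T)" using pimapD(4)[OF S] pimapD(4)[OF T] by (rule single_valued_relcomp)
  show "single_valued (converse (S O T))" unfolding converse_relcomp
    using pimapD(5)[OF T] pimapD(5)[OF S] by (rule single_valued_relcomp)
next
  fix a c a' c' assume "(a,c) \<in> S O T" "(a',c') \<in> S O T"
  then obtain b b' where "(a,b) \<in> S" "(b,c) \<in> T" "(a',b') \<in> S" "(b',c') \<in> T" by blast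
  then have "(a+a', b+b') \<in> S" "(b+b', c+c') \<in> T" using pimapD(3)[OF S] pimapD(3)[OF T] by auto
  then show "(a+a', c+c') \<in> S O T" by blast
next
  fix a c assume "(a,c) \<in> S O T"
  then obtain b where "(a,b) \<in> S" "(b,c) \<in> T" by blast
  then show "qf U c = qf V a" using pimapD(6)[OF S] pimapD(6)[OF T] by metis
qed

lemma pimap_conv:
  assumes S: "pimap V W S"
  shows "pimap W V (converse S)"
  unfolding pimap_def
proof (intro conjI allI impI)
  show "converse S \<subseteq> car W \<times> car V" using pimapD(1)[OF S] by blast
  show "(0,0) \<in> converse S" using pimapD(2)[OF S] by blast
  show "single_valued (converse S)" using pimapD(5)[OF S] .
  show "single_valued (converse (converse S))" using pimapD(4)[OF S] by simp
next
  fix a c a' c' assume "(a,c) \<in> converse S" "(a',c') \<in> converse S"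
  then show "(a+a', c+c') \<in> converse S" using pimapD(3)[OF S] by simp
next
  fix a c assume "(a,c) \<in> converse S"
  then show "qf V c = qf W a" using pimapD(6)[OF S] by simp
qed

lemma pimap_Id_robj:
  assumes "X \<subseteq> car V" "subspace2 X"
  shows "pimap (robj V X) V (Id_on X)"
  using assms unfolding pimap_def subspace2_def
  by (auto simp: qf_robj single_valued_def)

lemma pimap_Id:
  assumes "is_obj A"
  shows "pimap A A (Id_on (car A))"
  using assms unfolding pimap_def is_obj_def subspace2_def
  by (auto simp: single_valued_def)

lemma pimap_up:
  assumes "X \<subseteq> car V" "pimap (robj V X) W R"
  shows "pimap V W R"
proof -
  have "R \<subseteq> X \<times> car W" using pimapD(1)[OF assms(2)] by simp
  then show ?thesis using assms unfolding pimap_def by (auto simp: qf_robj)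
qed

lemma pimap_down:
  assumes "pimap V W S"
  shows "pimap (robj V (Domain S)) W S"
  using assms unfolding pimap_def by (auto simp: qf_robj)

lemma Domain_sub:
  assumes "pimap V W S"
  shows "Domain S \<subseteq> car V" "subspace2 (Domain S)"
proof -
  show "Domain S \<subseteq> car V" using pimapD(1)[OF assms] by blast
  show "subspace2 (Domain S)" unfolding subspace2_def
  proof (intro conjI ballI)
    show "0 \<in> Domain S" using pimapD(2)[OF assms] by (rule DomainI)
  next
    fix x y assume "x \<in> Domain S" "y \<in> Domain S"
    then obtain b b' where "(x,b) \<in> S" "(y,b') \<in> S" by blast
    then have "(x + y, b + b') \<in> S" by (rule pimapD(3)[OF assms])
    then show "x + y \<in> Domain S" by (rule DomainI)
  qed
qed

lemma finite_hom:
  assumes "is_obj V" "is_obj W"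
  shows "finite (hom V W)"
proof -
  have "hom V W \<subseteq> Pow (car V \<times> car W)" using hom_char[OF assms] pimapD(1) by blast
  moreover have "finite (car V)" "finite (car W)" using assms by (auto simp: is_obj_def)
  ultimately show ?thesis by (meson finite_Pow_iff finite_SigmaI finite_subset)
qed

lemma id_iff:
  assumes R: "pimap A W R" and S: "pimap A W S"
  shows "(R O converse S = Id_on (car A)) \<longleftrightarrow> (R = S \<and> Domain S = car A)"
proof
  assume H: "R O converse S = Id_on (car A)"
  have ex: "\<exists>w. (a,w) \<in> R \<and> (a,w) \<in> S" if "a \<in> car A" for a
  proof -
    have "(a,a) \<in> Id_on (car A)" using that by (rule Id_onI)
    then have "(a,a) \<in> R O converse S" using H by simp
    then show ?thesis by blast
  qed
  have "R \<subseteq> S"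
  proof
    fix p assume p: "p \<in> R"
    obtain a w where pw: "p = (a,w)" by (cases p)
    have "a \<in> car A" using p pw pimapD(1)[OF R] by blast
    then obtain w' where "(a,w') \<in> R" "(a,w') \<in> S" using ex by blast
    moreover have "w = w'" using single_valuedD[OF pimapD(4)[OF R]] p pw \<open>(a,w') \<in> R\<close> by blast
    ultimately show "p \<in> S" using pw by simp
  qed
  moreover have "S \<subseteq> R"
  proof
    fix p assume p: "p \<in> S"
    obtain a w where pw: "p = (a,w)" by (cases p)
    have "a \<in> car A" using p pw pimapD(1)[OF S] by blast
    then obtain w' where "(a,w') \<in> R" "(a,w') \<in> S" using ex by blast
    moreover have "w = w'" using single_valuedD[OF pimapD(4)[OF S]] p pw \<open>(a,w') \<in> S\<close> by blast
    ultimately show "p \<in> R" using pw by simp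
  qed
  moreover have "Domain S = car A"
  proof
    show "Domain S \<subseteq> car A" using pimapD(1)[OF S] by blast
    show "car A \<subseteq> Domain S" using ex by blast
  qed
  ultimately show "R = S \<and> Domain S = car A" by blast
next
  assume H: "R = S \<and> Domain S = car A"
  show "R O converse S = Id_on (car A)"
  proof
    show "R O converse S \<subseteq> Id_on (car A)"
    proof
      fix p assume "p \<in> R O converse S"
      then obtain a a' w where p: "p = (a,a')" "(a,w) \<in> S" "(a',w) \<in> S" using H by blast
      then have "a = a'" using single_valuedD[OF pimapD(5)[OF S]] by blast
      then show "p \<in> Id_on (car A)" using p H by blast
    qed
    show "Id_on (car A) \<subseteq> R O converse S" using H by blast
  qed
qed

lemma cancel:
  assumes "single_valued S" "single_valued (converse T)" "Domain S \<subseteq> Domain (S O T)"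
  shows "(S O T) O converse T = S"
proof
  show "(S O T) O converse T \<subseteq> S"
  proof
    fix p assume "p \<in> (S O T) O converse T"
    then obtain a b c w where p: "p = (a,c)" "(a,b) \<in> S" "(b,w) \<in> T" "(c,w) \<in> T" by blast
    then have "b = c" using single_valuedD[OF assms(2)] by blast
    then show "p \<in> S" using p by simp
  qed
  show "S \<subseteq> (S O T) O converse T"
  proof
    fix p assume p: "p \<in> S"
    obtain a b where pw: "p = (a,b)" by (cases p)
    then have "a \<in> Domain (S O T)" using p assms(3) by blast
    then obtain b' w where "(a,b') \<in> S" "(b',w) \<in> T" by blast
    moreover have "b' = b" using single_valuedD[OF assms(1)] p pw \<open>(a,b') \<in> S\<close> by blast
    ultimately show "p \<in> (S O T) O converse T" using pw by blast
  qed
qed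

lemma cond_iff:
  assumes S: "pimap A W S" and R: "pimap A W' R" and T: "pimap W W' T"
  shows "(Domain R = car A \<and> S O T = R) \<longleftrightarrow> (Domain S = car A \<and> R O converse T = S)"
proof
  assume H: "Domain R = car A \<and> S O T = R"
  have "Domain S = car A" using H pimapD(1)[OF S] by blast
  moreover have "R O converse T = S"
    using H cancel[OF pimapD(4)[OF S] pimapD(5)[OF T]] \<open>Domain S = car A\<close> by simp
  ultimately show "Domain S = car A \<and> R O converse T = S" by blast
next
  assume H: "Domain S = car A \<and> R O converse T = S"
  have "Domain R = car A" using H pimapD(1)[OF R] by blast
  moreover have "S O T = R"
    using H cancel[OF pimapD(4)[OF R], of "converse T"] pimapD(4)[OF T] \<open>Domain R = car A\<close> by simp
  ultimately show "Domain R = car A \<and> S O T = R" by blast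
qed

definition push :: "smor set \<Rightarrow> smor set \<Rightarrow> (smor \<Rightarrow> smor) \<Rightarrow> (smor \<Rightarrow> bit) \<Rightarrow> smor \<Rightarrow> bit" where
  "push H H' g x = (\<lambda>b. if b \<in> H' then (\<Sum>a\<in>{a\<in>H. g a = b}. x a) else 0)"

lemma Qmor_push: "Qmor V W W' T x = push (hom V W) (hom V W') (\<lambda>S. S O T) x"
  by (simp add: Qmor_def push_def)

lemma push_comp:
  assumes fin: "finite H" "finite H'" and img: "\<And>a. a \<in> H \<Longrightarrow> g a \<in> H'"
  shows "push H' H'' g' (push H H' g x) = push H H'' (\<lambda>a. g' (g a)) x"
proof (rule ext)
  fix c
  show "push H' H'' g' (push H H' g x) c = push H H'' (\<lambda>a. g' (g a)) x c"
  proof (cases "c \<in> H''")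
    case True
    have "(\<Sum>b\<in>{b\<in>H'. g' b = c}. push H H' g x b)
        = (\<Sum>b\<in>{b\<in>H'. g' b = c}. \<Sum>a\<in>{a. a \<in> {a\<in>H. g' (g a) = c} \<and> g a = b}. x a)"
    proof (rule sum.cong)
      fix b assume "b \<in> {b\<in>H'. g' b = c}"
      then have "{a. a \<in> {a\<in>H. g' (g a) = c} \<and> g a = b} = {a\<in>H. g a = b}" "b \<in> H'" by auto
      then show "push H H' g x b = (\<Sum>a\<in>{a. a \<in> {a\<in>H. g' (g a) = c} \<and> g a = b}. x a)"
        by (simp add: push_def)
    qed simp
    also have "\<dots> = (\<Sum>a\<in>{a\<in>H. g' (g a) = c}. x a)"
      by (rule sum.group) (use fin img in auto)
    finally show ?thesis using True by (simp add: push_def)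
  qed (simp add: push_def)
qed

lemma push_add: "push H H' g (x + y) = push H H' g x + push H H' g y"
  by (rule ext) (simp add: push_def sum.distrib)

lemma push_Qob: "push H (hom V W) g x \<in> Qob V W"
  by (simp add: push_def Qob_def)

lemma Qmor_Qob: "Qmor V W W' T x \<in> Qob V W'"
  by (simp add: Qmor_def Qob_def)

definition tot :: "qobj \<Rightarrow> qobj \<Rightarrow> smor set" where
  "tot A W = {S\<in>hom A W. Domain S = car A}"

lemma finite_tot: "is_obj A \<Longrightarrow> is_obj W \<Longrightarrow> finite (tot A W)"
  using finite_hom unfolding tot_def by auto


lemma delta_Qmor:
  assumes A: "is_obj A" and W: "is_obj W" and S: "S \<in> hom A W"
  shows "delta_id A (Qmor A W A (converse S) y) = (if Domain S = car A then y S else 0)"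
proof -
  have IdA: "Id_on (car A) \<in> hom A A" using hom_char[OF A A] pimap_Id[OF A] by simp
  have key: "\<And>R. R \<in> hom A W \<Longrightarrow> (R O converse S = Id_on (car A)) \<longleftrightarrow> (R = S \<and> Domain S = car A)"
    using id_iff[of A W _ S] hom_char[OF A W] S by blast
  have "{R \<in> hom A W. R O converse S = Id_on (car A)} = {R \<in> hom A W. R = S \<and> Domain S = car A}"
    using key by (rule_tac Collect_cong) blast
  also have "\<dots> = (if Domain S = car A then {S} else {})" using S by auto
  finally have E: "{R \<in> hom A W. R O converse S = Id_on (car A)} = (if Domain S = car A then {S} else {})" .
  have "delta_id A (Qmor A W A (converse S) y) = Qmor A W A (converse S) y (Id_on (car A))"
    using Qmor_Qob[of A W A "converse S" y] by (simp add: delta_id_def)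
  also have "\<dots> = (\<Sum>R\<in>{R \<in> hom A W. R O converse S = Id_on (car A)}. y R)"
    using IdA by (simp add: Qmor_def)
  also have "\<dots> = (if Domain S = car A then y S else 0)" unfolding E by simp
  finally show ?thesis .
qed
lemma a_map_eq:
  assumes A: "is_obj A" and W: "is_obj W"
  shows "a_map A W x = (\<lambda>y. if y \<in> Qob A W then (\<Sum>S\<in>tot A W. x S * y S) else 0)"
proof (rule ext)
  fix y
  have FM: "Fmor (dual_fun (Qfun A)) A W S (delta_id A) y
      = (if y \<in> Qob A W then delta_id A (Qmor A W A (converse S) y) else 0)" for S
    by (simp add: Fmor_def dual_fun_def Fob_def Qfun_def)
  have "a_map A W x y = (\<Sum>S\<in>hom A W. (if x S = 1 then Fmor (dual_fun (Qfun A)) A W S (delta_id A) else 0) y)"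
    unfolding a_map_def yoneda_def by (rule sum_fun_apply)
  also have "\<dots> = (\<Sum>S\<in>hom A W. if y \<in> Qob A W then (if Domain S = car A then x S * y S else 0) else 0)"
  proof (rule sum.cong)
    fix S assume S: "S \<in> hom A W"
    have e: "(if x S = 1 then Fmor (dual_fun (Qfun A)) A W S (delta_id A) else 0) y
       = x S * Fmor (dual_fun (Qfun A)) A W S (delta_id A) y"
      by (cases "x S") simp_all
    show "(if x S = 1 then Fmor (dual_fun (Qfun A)) A W S (delta_id A) else 0) y
       = (if y \<in> Qob A W then (if Domain S = car A then x S * y S else 0) else 0)"
      unfolding e FM delta_Qmor[OF A W S, of y] by simp
  qed simp
  also have "\<dots> = (if y \<in> Qob A W then (\<Sum>S\<in>tot A W. x S * y S) else 0)"
    using finite_hom[OF A W] unfolding tot_def by (simp add: sum.inter_filter)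
  finally show "a_map A W x y = (if y \<in> Qob A W then (\<Sum>S\<in>tot A W. x S * y S) else 0)" .
qed
lemma dsum_filter:
  assumes "finite H" "finite K"
  shows "(\<Sum>R\<in>{R\<in>K. P R}. \<Sum>S\<in>{S\<in>H. Q S R}. f S R)
       = (\<Sum>R\<in>K. \<Sum>S\<in>H. if P R \<and> Q S R then f S R else (0::'a::comm_monoid_add))"
proof -
  have "(\<Sum>R\<in>{R\<in>K. P R}. \<Sum>S\<in>{S\<in>H. Q S R}. f S R) = (\<Sum>R\<in>K. if P R then (\<Sum>S\<in>{S\<in>H. Q S R}. f S R) else 0)"
    using assms(2) by (rule sum.inter_filter)
  also have "\<dots> = (\<Sum>R\<in>K. \<Sum>S\<in>H. if P R \<and> Q S R then f S R else 0)"
  proof (rule sum.cong)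
    fix R assume "R \<in> K"
    show "(if P R then (\<Sum>S\<in>{S\<in>H. Q S R}. f S R) else 0) = (\<Sum>S\<in>H. if P R \<and> Q S R then f S R else 0)"
      using assms(1) by (cases "P R") (simp_all add: sum.inter_filter)
  qed simp
  finally show ?thesis .
qed

lemma adj:
  assumes A: "is_obj A" and W: "is_obj W" and W': "is_obj W'" and T: "T \<in> hom W W'"
  shows "(\<Sum>R\<in>tot A W'. push (hom A W) (hom A W') (\<lambda>S. S O T) x R * y R)
       = (\<Sum>S\<in>tot A W. x S * push (hom A W') (hom A W) (\<lambda>R. R O converse T) y S)"
proof -
  have fH: "finite (hom A W)" and fK: "finite (hom A W')" using finite_hom A W W' by auto
  have PT: "pimap W W' T" using T hom_char[OF W W'] by simp
  have "(\<Sum>R\<in>tot A W'. push (hom A W) (hom A W') (\<lambda>S. S O T) x R * y R)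
      = (\<Sum>R\<in>{R\<in>hom A W'. Domain R = car A}. \<Sum>S\<in>{S\<in>hom A W. S O T = R}. x S * y R)"
    unfolding tot_def by (rule sum.cong) (auto simp: push_def sum_distrib_right)
  also have "\<dots> = (\<Sum>R\<in>hom A W'. \<Sum>S\<in>hom A W. if Domain R = car A \<and> S O T = R then x S * y R else 0)"
    using fH fK by (rule dsum_filter)
  also have "\<dots> = (\<Sum>S\<in>hom A W. \<Sum>R\<in>hom A W'. if Domain R = car A \<and> S O T = R then x S * y R else 0)"
    by (rule sum.swap)
  also have "\<dots> = (\<Sum>S\<in>hom A W. \<Sum>R\<in>hom A W'. if Domain S = car A \<and> R O converse T = S then x S * y R else 0)"
  proof (rule sum.cong[OF refl], rule sum.cong[OF refl])
    fix S R assume "S \<in> hom A W" "R \<in> hom A W'"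
    then have "pimap A W S" "pimap A W' R" using hom_char A W W' by auto
    then have "(Domain R = car A \<and> S O T = R) = (Domain S = car A \<and> R O converse T = S)"
      using PT by (rule cond_iff)
    then show "(if Domain R = car A \<and> S O T = R then x S * y R else 0)
        = (if Domain S = car A \<and> R O converse T = S then x S * y R else 0)" by simp
  qed
  also have "\<dots> = (\<Sum>S\<in>{S\<in>hom A W. Domain S = car A}. \<Sum>R\<in>{R\<in>hom A W'. R O converse T = S}. x S * y R)"
    using fK fH by (rule dsum_filter[symmetric])
  also have "\<dots> = (\<Sum>S\<in>tot A W. x S * push (hom A W') (hom A W) (\<lambda>R. R O converse T) y S)"
    unfolding tot_def by (rule sum.cong) (auto simp: push_def sum_distrib_left)
  finally show ?thesis .
qed

lemma a_map_nat:
  assumes A: "is_obj A" and W: "is_obj W" and W': "is_obj W'" and T: "T \<in> hom W W'"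
  shows "a_map A W' (Qmor A W W' T x) = Fmor (dual_fun (Qfun A)) W W' T (a_map A W x)"
proof (rule ext)
  fix y
  have "Fmor (dual_fun (Qfun A)) W W' T (a_map A W x) y
      = (if y \<in> Qob A W' then a_map A W x (Qmor A W' W (converse T) y) else 0)"
    by (simp add: Fmor_def dual_fun_def Fob_def Qfun_def)
  also have "\<dots> = (if y \<in> Qob A W' then (\<Sum>S\<in>tot A W. x S * Qmor A W' W (converse T) y S) else 0)"
    using Qmor_Qob[of A W' W "converse T" y] by (simp add: a_map_eq[OF A W])
  also have "\<dots> = (if y \<in> Qob A W' then (\<Sum>R\<in>tot A W'. Qmor A W W' T x R * y R) else 0)"
    unfolding Qmor_push using adj[OF A W W' T, of x y] by simp
  also have "\<dots> = a_map A W' (Qmor A W W' T x) y"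
    by (simp add: a_map_eq[OF A W'])
  finally show "a_map A W' (Qmor A W W' T x) y = Fmor (dual_fun (Qfun A)) W W' T (a_map A W x) y" ..
qed

lemma finite_Qob:
  assumes "is_obj V" "is_obj W" shows "finite (Qob V W)"
proof -
  have "Qob V W = {f. \<forall>x. (x \<in> hom V W \<longrightarrow> f x \<in> {0,1}) \<and> (x \<notin> hom V W \<longrightarrow> f x = 0)}"
    unfolding Qob_def by (auto intro: bit.exhaust)
  then show ?thesis using finite_set_of_finite_funs[OF finite_hom[OF assms], of "{0,1}" 0] by simp
qed

lemma sub_facts:
  assumes V: "is_obj V" and A: "A \<in> subobjects V"
  shows "is_obj A" "car A \<subseteq> car V" "A = robj V (car A)" "subspace2 (car A)" "Id_on (car A) \<in> hom A V"
proof -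
  obtain X where X: "A = robj V X" "X \<subseteq> car V" "subspace2 X" using A unfolding subobjects_robj by blast
  show oA: "is_obj A" using robj_obj[OF V X(2,3)] X(1) by simp
  show "car A \<subseteq> car V" "A = robj V (car A)" "subspace2 (car A)" using X by auto
  show "Id_on (car A) \<in> hom A V" using hom_char[OF oA V] pimap_Id_robj[OF X(2,3)] X(1) by simp
qed

definition pre :: "qobj \<Rightarrow> qobj \<Rightarrow> qobj \<Rightarrow> (smor \<Rightarrow> bit) \<Rightarrow> smor \<Rightarrow> bit" where
  "pre V A W x = push (hom V W) (hom A W) (\<lambda>S. Id_on (car A) O S) x"

definition Phi :: "qobj \<Rightarrow> qobj \<Rightarrow> (smor \<Rightarrow> bit) \<Rightarrow> qobj \<Rightarrow> (smor \<Rightarrow> bit) \<Rightarrow> bit" where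
  "Phi V W x = (\<lambda>A. if A \<in> subobjects V then a_map A W (pre V A W x) else 0)"

lemma comp_hom:
  assumes "is_obj V" "is_obj W" "is_obj U" "S \<in> hom V W" "T \<in> hom W U"
  shows "S O T \<in> hom V U"
  using assms hom_char pimap_comp by metis

lemma pre_nat:
  assumes V: "is_obj V" and A: "A \<in> subobjects V" and W: "is_obj W" and W': "is_obj W'"
    and T: "T \<in> hom W W'"
  shows "pre V A W' (Qmor V W W' T x) = Qmor A W W' T (pre V A W x)"
proof -
  have oA: "is_obj A" and j: "Id_on (car A) \<in> hom A V" using sub_facts[OF V A] by auto
  have "pre V A W' (Qmor V W W' T x) = push (hom V W) (hom A W') (\<lambda>S. Id_on (car A) O (S O T)) x"
    unfolding pre_def Qmor_push
    by (rule push_comp) (use finite_hom V W W' comp_hom T in auto)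
  also have "\<dots> = push (hom V W) (hom A W') (\<lambda>S. (Id_on (car A) O S) O T) x"
    by (simp add: O_assoc)
  also have "\<dots> = Qmor A W W' T (pre V A W x)"
    unfolding pre_def Qmor_push
    by (rule push_comp[symmetric]) (use finite_hom V W oA comp_hom j in auto)
  finally show ?thesis .
qed

lemma Fmor_iso: "Fmor (iso_fun A) = Fmor (dual_fun (Qfun A))" by (simp add: iso_fun_def Fmor_def)
lemma Fob_iso: "Fob (iso_fun A) W = a_map A W ` Qob A W" by (simp add: iso_fun_def Fob_def)
lemma Fmor_dsum: "Fmor (dsum I F) W W' S y = (\<lambda>i. if i \<in> I then Fmor (F i) W W' S (y i) else 0)"
  by (simp add: dsum_def Fmor_def)
lemma Fob_dsum: "Fob (dsum I F) W = {y. (\<forall>i\<in>I. y i \<in> Fob (F i) W) \<and> (\<forall>i. i \<notin> I \<longrightarrow> y i = 0)}"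
  by (simp add: dsum_def Fob_def)
lemma Fob_Qfun: "Fob (Qfun V) = Qob V" by (simp add: Qfun_def Fob_def)
lemma Fmor_Qfun: "Fmor (Qfun V) = Qmor V" by (simp add: Qfun_def Fmor_def)

lemma Phi_nat:
  assumes V: "is_obj V" and W: "is_obj W" and W': "is_obj W'" and T: "T \<in> hom W W'"
  shows "Phi V W' (Qmor V W W' T x) = Fmor (dsum (subobjects V) iso_fun) W W' T (Phi V W x)"
proof (rule ext)
  fix A
  show "Phi V W' (Qmor V W W' T x) A = Fmor (dsum (subobjects V) iso_fun) W W' T (Phi V W x) A"
  proof (cases "A \<in> subobjects V")
    case True
    have oA: "is_obj A" using sub_facts[OF V True] by auto
    show ?thesis using True
      by (simp add: Phi_def Fmor_dsum Fmor_iso pre_nat[OF V True W W' T] a_map_nat[OF oA W W' T])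
  qed (simp add: Phi_def Fmor_dsum)
qed

lemma a_map_add:
  assumes "is_obj A" "is_obj W"
  shows "a_map A W (x + y) = a_map A W x + a_map A W y"
  by (rule ext) (simp add: a_map_eq[OF assms] distrib_right sum.distrib)

lemma Phi_add:
  assumes V: "is_obj V" and W: "is_obj W"
  shows "Phi V W (x + y) = Phi V W x + Phi V W y"
proof (rule ext)
  fix A show "Phi V W (x + y) A = (Phi V W x + Phi V W y) A"
  proof (cases "A \<in> subobjects V")
    case True
    have oA: "is_obj A" using sub_facts[OF V True] by auto
    show ?thesis using True by (simp add: Phi_def pre_def push_add a_map_add[OF oA W])
  qed (simp add: Phi_def)
qed

lemma Phi_in:
  assumes V: "is_obj V" and W: "is_obj W"
  shows "Phi V W x \<in> Fob (dsum (subobjects V) iso_fun) W"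
  unfolding Fob_dsum Fob_iso
  by (auto simp: Phi_def pre_def push_Qob)

definition dlt :: "smor \<Rightarrow> smor \<Rightarrow> bit" where "dlt S = (\<lambda>R. if R = S then 1 else 0)"

lemma a_map_delta:
  assumes A: "is_obj A" and W: "is_obj W" and R: "R \<in> tot A W"
  shows "a_map A W x (dlt R) = x R"
proof -
  have "dlt R \<in> Qob A W" using R by (auto simp: Qob_def dlt_def tot_def)
  then have "a_map A W x (dlt R) = (\<Sum>S\<in>tot A W. x S * dlt R S)"
    by (simp add: a_map_eq[OF A W])
  also have "\<dots> = (\<Sum>S\<in>tot A W. if R = S then x S else 0)"
    by (rule sum.cong) (auto simp: dlt_def)
  also have "\<dots> = x R" using finite_tot[OF A W] R by simp
  finally show ?thesis .
qed

lemma a_map_det: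
  assumes A: "is_obj A" and W: "is_obj W" and E: "\<And>R. R \<in> tot A W \<Longrightarrow> x R = x' R"
  shows "a_map A W x = a_map A W x'"
  by (rule ext) (simp add: a_map_eq[OF A W] E)

lemma Id_Dom: "Id_on (Domain S) O S = S" by (auto simp: Id_on_iff)

lemma Phi_zero:
  assumes V: "is_obj V" and W: "is_obj W" and z: "z \<in> Qob V W" and P: "Phi V W z = 0"
  shows "z = 0"
proof (rule ccontr)
  assume "z \<noteq> 0"
  then obtain S0 where "z S0 \<noteq> 0" by (auto simp: fun_eq_iff)
  then have S0: "S0 \<in> {S\<in>hom V W. z S = 1}" using z by (auto simp: Qob_def)
  have "finite {S\<in>hom V W. z S = 1}" using finite_hom[OF V W] by simp
  then obtain S where S: "S \<in> {S\<in>hom V W. z S = 1}"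
     and mx: "\<And>S'. S' \<in> {S\<in>hom V W. z S = 1} \<Longrightarrow> S \<le> S' \<Longrightarrow> S = S'"
    using finite_has_maximal[of "{S\<in>hom V W. z S = 1}"] S0 by blast
  have pS: "pimap V W S" using S hom_char[OF V W] by simp
  define A where "A = robj V (Domain S)"
  have AV: "A \<in> subobjects V" using Domain_sub[OF pS] unfolding A_def subobjects_robj by blast
  have oA: "is_obj A" using sub_facts[OF V AV] by simp
  have carA: "car A = Domain S" by (simp add: A_def)
  have SA: "S \<in> hom A W" using hom_char[OF oA W] pimap_down[OF pS] A_def by simp
  have St: "S \<in> tot A W" using SA carA by (simp add: tot_def)
  have "a_map A W (pre V A W z) = 0" using fun_cong[OF P, of A] AV by (simp add: Phi_def)
  then have "a_map A W (pre V A W z) (dlt S) = 0" by simp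
  then have "pre V A W z S = 0" using a_map_delta[OF oA W St] by simp
  moreover have "pre V A W z S = 1"
  proof -
    let ?C = "{S'\<in>hom V W. Id_on (car A) O S' = S}"
    have fC: "finite ?C" using finite_hom[OF V W] by simp
    have SC: "S \<in> ?C" using S carA Id_Dom by simp
    have "pre V A W z S = (\<Sum>S'\<in>?C. z S')" using SA by (simp add: pre_def push_def)
    also have "\<dots> = z S + (\<Sum>S'\<in>?C - {S}. z S')" using sum.remove[OF fC SC] by simp
    also have "(\<Sum>S'\<in>?C - {S}. z S') = 0"
    proof (rule sum.neutral, rule ballI)
      fix S' assume S': "S' \<in> ?C - {S}"
      then have "S \<le> S'" by blast
      then show "z S' = 0" using mx[of S'] S' by (cases "z S'") auto
    qed
    finally show ?thesis using S by simp
  qed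
  ultimately show False by simp
qed

lemma fun_add_self: "(f :: qobj \<Rightarrow> (smor \<Rightarrow> bit) \<Rightarrow> bit) + f = 0"
  by (rule ext)+ simp

lemma Phi_inj:
  assumes V: "is_obj V" and W: "is_obj W"
  shows "inj_on (Phi V W) (Qob V W)"
proof (rule inj_onI)
  fix x y assume x: "x \<in> Qob V W" and y: "y \<in> Qob V W" and E: "Phi V W x = Phi V W y"
  have "x + y \<in> Qob V W" using x y by (simp add: Qob_def)
  moreover have "Phi V W (x + y) = 0" using E by (simp add: Phi_add[OF V W] fun_add_self)
  ultimately have "x + y = 0" using Phi_zero[OF V W] by blast
  then show "x = y"
  proof -
    assume h: "x + y = 0"
    show "x = y"
    proof (rule ext)
      fix S have "x S + y S = 0" using fun_cong[OF h, of S] by simp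
      then show "x S = y S" by (cases "x S"; cases "y S") simp_all
    qed
  qed
qed

definition Psi :: "qobj \<Rightarrow> qobj \<Rightarrow> (qobj \<Rightarrow> (smor \<Rightarrow> bit) \<Rightarrow> bit) \<Rightarrow> smor \<Rightarrow> bit" where
  "Psi V W y = (\<lambda>S. if S \<in> hom V W then y (robj V (Domain S)) (dlt S) else 0)"

lemma Psi_inj:
  assumes V: "is_obj V" and W: "is_obj W"
  shows "inj_on (Psi V W) (Fob (dsum (subobjects V) iso_fun) W)"
proof (rule inj_onI)
  fix y y' assume y: "y \<in> Fob (dsum (subobjects V) iso_fun) W" and y': "y' \<in> Fob (dsum (subobjects V) iso_fun) W"
    and E: "Psi V W y = Psi V W y'"
  show "y = y'"
  proof (rule ext)
    fix A show "y A = y' A"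
    proof (cases "A \<in> subobjects V")
      case False
      have "y A = 0" "y' A = 0" using y y' False unfolding Fob_dsum by blast+
      then show ?thesis by simp
    next
      case True
      have oA: "is_obj A" and cV: "car A \<subseteq> car V" and rA: "A = robj V (car A)" using sub_facts[OF V True] by auto
      obtain x where x: "y A = a_map A W x" using y True by (auto simp: Fob_dsum Fob_iso)
      obtain x' where x': "y' A = a_map A W x'" using y' True by (auto simp: Fob_dsum Fob_iso)
      have "a_map A W x = a_map A W x'"
      proof (rule a_map_det[OF oA W])
        fix R assume R: "R \<in> tot A W"
        have pR: "pimap A W R" and dR: "Domain R = car A" using R hom_char[OF oA W] by (auto simp: tot_def)
        have "pimap V W R" using pimap_up[OF cV] pR rA by metis
        then have RV: "R \<in> hom V W" using hom_char[OF V W] by simp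
        have "robj V (Domain R) = A" using dR rA by simp
        then have "y A (dlt R) = y' A (dlt R)" using fun_cong[OF E, of R] RV by (simp add: Psi_def)
        then show "x R = x' R" using x x' a_map_delta[OF oA W R] by simp
      qed
      then show ?thesis using x x' by simp
    qed
  qed
qed

lemma Psi_in: "Psi V W y \<in> Qob V W" by (simp add: Psi_def Qob_def)

lemma Phi_bij:
  assumes V: "is_obj V" and W: "is_obj W"
  shows "bij_betw (Phi V W) (Qob V W) (Fob (dsum (subobjects V) iso_fun) W)"
proof -
  define F where "F = Fob (dsum (subobjects V) iso_fun) W"
  have fQ: "finite (Qob V W)" using finite_Qob[OF V W] .
  have inj: "inj_on (Phi V W) (Qob V W)" using Phi_inj[OF V W] .
  have sub: "Phi V W ` Qob V W \<subseteq> F" unfolding F_def using Phi_in[OF V W] by (rule image_subsetI)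
  have iP: "inj_on (Psi V W) F" unfolding F_def using Psi_inj[OF V W] .
  have sP: "Psi V W ` F \<subseteq> Qob V W" using Psi_in by (rule image_subsetI)
  have fF: "finite F" using finite_imageD[OF finite_subset[OF sP fQ] iP] .
  have c1: "card F \<le> card (Qob V W)" using card_inj_on_le[OF iP sP fQ] .
  have c2: "card (Phi V W ` Qob V W) = card (Qob V W)" using card_image[OF inj] .
  have c3: "card (Phi V W ` Qob V W) \<le> card F" using card_mono[OF fF sub] .
  have "Phi V W ` Qob V W = F" using card_subset_eq[OF fF sub] c1 c2 c3 by linarith
  then show ?thesis using inj unfolding F_def by (simp add: bij_betw_def)
qed

theorem theorem4p31:
  assumes "is_obj V"
  shows "nat_iso (Qfun V) (dsum (subobjects V) iso_fun)"
  unfolding nat_iso_def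
proof (rule exI[of _ "Phi V"], intro allI impI conjI ballI)
  fix W assume W: "is_obj W"
  show "bij_betw (Phi V W) (Fob (Qfun V) W) (Fob (dsum (subobjects V) iso_fun) W)"
    unfolding Fob_Qfun using Phi_bij[OF assms W] .
next
  fix W x y assume W: "is_obj W"
  show "Phi V W (x + y) = Phi V W x + Phi V W y" using Phi_add[OF assms W] .
next
  fix W W' S x assume W: "is_obj W" and W': "is_obj W'" and S: "S \<in> hom W W'"
  show "Phi V W' (Fmor (Qfun V) W W' S x) = Fmor (dsum (subobjects V) iso_fun) W W' S (Phi V W x)"
    unfolding Fmor_Qfun using Phi_nat[OF assms W W' S] .
qed

end
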